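(* Let $1\le k<n$ and $A\in\mathbb{M}_n$. The following are equivalent: (a) $A=\gamma I$ for some $\gamma\in\mathbb{C}$; (b) $A\parallel B$ for every $B\in\mathbb{M}_n$; (c) $A\parallel P$ for every rank-$k$ orthogonal projection $P\in\mathbb{M}_n$.
   Context: For $A\in\mathbb{M}_n$: $w_k(A)=\max\{|\operatorname{tr}(AP)|: P=P^*=P^2,\operatorname{tr}P=k\}$. $A\parallel B$ means $w_k(A+\mu B)=w_k(A)+w_k(B)$ for some $\mu\in\mathbb{C}$ with $|\mu|=1$. *)

theory Defs
  imports "Jordan_Normal_Form.Schur_Decomposition" "Jordan_Normal_Form.DL_Rank"
begin

definition mtrace :: "'a::comm_ring_1 mat \<Rightarrow> 'a" where
  "mtrace A = (\<Sum>i<dim_row A. A $$ (i, i))"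

definition orth_proj :: "nat \<Rightarrow> complex mat \<Rightarrow> bool" where
  "orth_proj n P \<longleftrightarrow> P \<in> carrier_mat n n \<and> mat_adjoint P = P \<and> P * P = P"

definition wk :: "nat \<Rightarrow> nat \<Rightarrow> complex mat \<Rightarrow> real" where
  "wk n k A = Sup {cmod (mtrace (A * P)) | P. orth_proj n P \<and> mtrace P = of_nat k}"

definition wk_parallel :: "nat \<Rightarrow> nat \<Rightarrow> complex mat \<Rightarrow> complex mat \<Rightarrow> bool" where
  "wk_parallel n k A B \<longleftrightarrow>
     (\<exists>\<mu>::complex. cmod \<mu> = 1 \<and> wk n k (A + \<mu> \<cdot>\<^sub>m B) = wk n k A + wk n k B)"

end

theory Submission
  imports Defs "HOL-Analysis.Topology_Euclidean_Space"
begin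


lemma mtrace_mult:
  assumes "A \<in> carrier_mat n n" "B \<in> carrier_mat n n"
  shows "mtrace (A * B) = (\<Sum>i<n. \<Sum>j<n. A $$ (i,j) * B $$ (j,i))"
  using assms unfolding mtrace_def
  by (auto simp: scalar_prod_def atLeast0LessThan intro!: sum.cong)

lemma mtrace_comm:
  assumes "A \<in> carrier_mat n n" "B \<in> carrier_mat n n"
  shows "mtrace (A * B) = mtrace (B * A)"
  unfolding mtrace_mult[OF assms] mtrace_mult[OF assms(2,1)]
  by (subst sum.swap) (simp add: mult.commute)

lemma mtrace_entries: "A \<in> carrier_mat n n \<Longrightarrow> mtrace A = (\<Sum>i<n. A $$ (i,i))"
  unfolding mtrace_def by auto

lemma adj_dims[simp]: "dim_row (mat_adjoint A) = dim_col A" "dim_col (mat_adjoint A) = dim_row A"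
  unfolding mat_adjoint_def by auto

lemma adj_carrier: "A \<in> carrier_mat n m \<Longrightarrow> mat_adjoint A \<in> carrier_mat m n"
  unfolding mat_adjoint_def by auto

lemma adj_index: "A \<in> carrier_mat n m \<Longrightarrow> i < m \<Longrightarrow> j < n \<Longrightarrow> mat_adjoint A $$ (i,j) = cnj (A $$ (j,i))"
  unfolding mat_adjoint_def by (auto simp: mat_of_rows_def)

lemma mult_index:
  assumes "C \<in> carrier_mat n m" "D \<in> carrier_mat m p" "i < n" "j < p"
  shows "(C * D) $$ (i,j) = (\<Sum>l<m. C $$ (i,l) * D $$ (l,j))"
  using assms by (auto simp: scalar_prod_def atLeast0LessThan intro!: sum.cong)

lemma adj_mult:
  fixes A B :: "complex mat"
  assumes "A \<in> carrier_mat n n" "B \<in> carrier_mat n n"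
  shows "mat_adjoint (A * B) = mat_adjoint B * mat_adjoint A"
proof (rule eq_matI)
  have c: "A * B \<in> carrier_mat n n" using assms by auto
  have aA: "mat_adjoint A \<in> carrier_mat n n" and aB: "mat_adjoint B \<in> carrier_mat n n"
    using adj_carrier assms by auto
  fix i j assume ij: "i < dim_row (mat_adjoint B * mat_adjoint A)" "j < dim_col (mat_adjoint B * mat_adjoint A)"
  have i: "i < n" and j: "j < n" using ij aA aB by auto
  have "mat_adjoint (A * B) $$ (i, j) = cnj ((A * B) $$ (j,i))" by (rule adj_index[OF c i j])
  also have "\<dots> = cnj (\<Sum>l<n. A $$ (j,l) * B $$ (l,i))" by (simp only: mult_index[OF assms j i])
  also have "\<dots> = (\<Sum>l<n. mat_adjoint B $$ (i,l) * mat_adjoint A $$ (l,j))"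
    using i j by (auto simp: adj_index[OF assms(1)] adj_index[OF assms(2)] intro!: sum.cong)
  also have "\<dots> = (mat_adjoint B * mat_adjoint A) $$ (i, j)" by (rule mult_index[OF aB aA i j, symmetric])
  finally show "mat_adjoint (A * B) $$ (i, j) = (mat_adjoint B * mat_adjoint A) $$ (i, j)" .
next
  show "dim_row (mat_adjoint (A * B)) = dim_row (mat_adjoint B * mat_adjoint A)"
    "dim_col (mat_adjoint (A * B)) = dim_col (mat_adjoint B * mat_adjoint A)" using assms by auto
qed

lemma orth_herm: "orth_proj n P \<Longrightarrow> i < n \<Longrightarrow> j < n \<Longrightarrow> P $$ (j,i) = cnj (P $$ (i,j))"
  unfolding orth_proj_def by (metis adj_index)

lemma orth_idem: "orth_proj n P \<Longrightarrow> i < n \<Longrightarrow> l < n \<Longrightarrow> (\<Sum>j<n. P $$ (i,j) * P $$ (j,l)) = P $$ (i,l)"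
proof -
  assume P: "orth_proj n P" and il: "i < n" "l < n"
  have Pc: "P \<in> carrier_mat n n" and PP: "P * P = P" using P unfolding orth_proj_def by auto
  have "P $$ (i,l) = (P * P) $$ (i,l)" using PP by simp
  also have "\<dots> = (\<Sum>j<n. P $$ (i,j) * P $$ (j,l))" by (rule mult_index[OF Pc Pc il])
  finally show ?thesis by (rule sym)
qed

lemma frob:
  assumes "M \<in> carrier_mat n n"
  shows "mtrace (mat_adjoint M * M) = of_real (\<Sum>i<n. \<Sum>j<n. (cmod (M $$ (i,j)))^2)"
proof -
  have "mtrace (mat_adjoint M * M) = (\<Sum>i<n. \<Sum>j<n. mat_adjoint M $$ (i,j) * M $$ (j,i))"
    using assms by (simp add: mtrace_mult adj_carrier)
  also have "\<dots> = (\<Sum>i<n. \<Sum>j<n. cnj (M $$ (j,i)) * M $$ (j,i))"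
    using assms by (intro sum.cong refl) (simp add: adj_index)
  also have "\<dots> = (\<Sum>j<n. \<Sum>i<n. cnj (M $$ (j,i)) * M $$ (j,i))" by (rule sum.swap)
  also have "\<dots> = (\<Sum>j<n. \<Sum>i<n. M $$ (j,i) * cnj (M $$ (j,i)))"
    by (simp add: mult.commute)
  also have "\<dots> = of_real (\<Sum>i<n. \<Sum>j<n. (cmod (M $$ (i,j)))^2)"
    by (simp only: of_real_sum complex_norm_square)
  finally show ?thesis .
qed

lemma entry_le_frob:
  assumes "i < n" "j < n"
  shows "(cmod (M $$ (i,j)))^2 \<le> (\<Sum>i<n. \<Sum>j<n. (cmod (M $$ (i,j)))^2)"
proof -
  have "(cmod (M $$ (i,j)))^2 \<le> (\<Sum>j<n. (cmod (M $$ (i,j)))^2)"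
    using assms by (intro member_le_sum) auto
  also have "\<dots> \<le> (\<Sum>i<n. \<Sum>j<n. (cmod (M $$ (i,j)))^2)"
    using assms by (intro member_le_sum[where f="\<lambda>i. \<Sum>j<n. (cmod (M $$ (i,j)))^2"]) (auto intro: sum_nonneg)
  finally show ?thesis .
qed

lemma trace_bound:
  assumes "\<And>i j. i < n \<Longrightarrow> j < n \<Longrightarrow> cmod (Y i j) \<le> b"
  shows "cmod (\<Sum>i<n. \<Sum>j<n. X i j * Y i j) \<le> (\<Sum>i<n. \<Sum>j<n. cmod (X i j)) * b"
proof -
  have "cmod (\<Sum>i<n. \<Sum>j<n. X i j * Y i j) \<le> (\<Sum>i<n. \<Sum>j<n. cmod (X i j * Y i j))"
    by (rule order_trans[OF norm_sum]) (intro sum_mono norm_sum)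
  also have "\<dots> \<le> (\<Sum>i<n. \<Sum>j<n. cmod (X i j) * b)"
    using assms by (intro sum_mono) (auto simp: norm_mult intro: mult_left_mono)
  also have "\<dots> = (\<Sum>i<n. \<Sum>j<n. cmod (X i j)) * b" by (simp add: sum_distrib_right)
  finally show ?thesis .
qed

lemma orth_carrier: "orth_proj n P \<Longrightarrow> P \<in> carrier_mat n n"
  unfolding orth_proj_def by auto

lemma trPQ_real:
  assumes P: "orth_proj n P" and Q: "orth_proj n Q"
  shows "mtrace (P * Q) = of_real (\<Sum>i<n. \<Sum>j<n. (cmod ((Q * P) $$ (i,j)))^2)"
proof -
  have Pc: "P \<in> carrier_mat n n" and Qc: "Q \<in> carrier_mat n n" using P Q orth_carrier by auto
  have aP: "mat_adjoint P = P" and aQ: "mat_adjoint Q = Q" and PP: "P * P = P" and QQ: "Q * Q = Q"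
    using P Q unfolding orth_proj_def by auto
  have R: "Q * P \<in> carrier_mat n n" using Pc Qc by auto
  have aR: "mat_adjoint (Q * P) = P * Q" using adj_mult[OF Qc Pc] unfolding aP aQ .
  have "of_real (\<Sum>i<n. \<Sum>j<n. (cmod ((Q * P) $$ (i,j)))^2) = mtrace ((P * Q) * (Q * P))"
    using frob[OF R] unfolding aR by (rule sym)
  also have "mtrace ((P * Q) * (Q * P)) = mtrace (P * (Q * P))"
  proof -
    have QPc: "Q * P \<in> carrier_mat n n" using Pc Qc by auto
    have "(P * Q) * (Q * P) = P * (Q * (Q * P))" by (rule assoc_mult_mat[OF Pc Qc QPc])
    also have "Q * (Q * P) = (Q * Q) * P" by (rule assoc_mult_mat[OF Qc Qc Pc, symmetric])
    finally have "(P * Q) * (Q * P) = P * (Q * P)" unfolding QQ .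
    then show ?thesis by (rule arg_cong)
  qed
  also have "mtrace (P * (Q * P)) = mtrace ((Q * P) * P)" using Pc Qc by (intro mtrace_comm) auto
  also have "mtrace ((Q * P) * P) = mtrace (Q * P)" using assoc_mult_mat[OF Qc Pc Pc] unfolding PP by (rule arg_cong)
  also have "mtrace (Q * P) = mtrace (P * Q)" using Pc Qc by (intro mtrace_comm) auto
  finally show ?thesis by (rule sym)
qed

lemma frob_diff:
  assumes P: "orth_proj n P" and Q: "orth_proj n Q"
  shows "of_real (\<Sum>i<n. \<Sum>j<n. (cmod ((P - Q) $$ (i,j)))^2) = mtrace P + mtrace Q - 2 * mtrace (P * Q)"
proof -
  have Pc: "P \<in> carrier_mat n n" and Qc: "Q \<in> carrier_mat n n" using P Q orth_carrier by auto
  have PP: "P * P = P" and QQ: "Q * Q = Q"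
    using P Q unfolding orth_proj_def by auto
  have Mc: "P - Q \<in> carrier_mat n n" using Pc Qc by auto
  have aM: "mat_adjoint (P - Q) = P - Q"
  proof (rule eq_matI)
    fix i j assume "i < dim_row (P - Q)" "j < dim_col (P - Q)"
    then have ij: "i < n" "j < n" using Pc Qc by auto
    show "mat_adjoint (P - Q) $$ (i, j) = (P - Q) $$ (i, j)"
    proof -
      have "cnj (P $$ (j,i)) = P $$ (i,j)" using orth_herm[OF P ij] by simp
      moreover have "cnj (Q $$ (j,i)) = Q $$ (i,j)" using orth_herm[OF Q ij] by simp
      ultimately show ?thesis using ij Pc Qc by (simp add: adj_index[OF Mc])
    qed
  qed (use Mc Pc Qc in auto)
  have "of_real (\<Sum>i<n. \<Sum>j<n. (cmod ((P - Q) $$ (i,j)))^2) = mtrace ((P - Q) * (P - Q))"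
    using frob[OF Mc] unfolding aM by (rule sym)
  also have "\<dots> = (\<Sum>i<n. \<Sum>j<n. (P $$ (i,j) - Q $$ (i,j)) * (P $$ (j,i) - Q $$ (j,i)))"
    unfolding mtrace_mult[OF Mc Mc] using Pc Qc by (intro sum.cong refl) simp
  also have "\<dots> = (\<Sum>i<n. \<Sum>j<n. P $$ (i,j) * P $$ (j,i)) - (\<Sum>i<n. \<Sum>j<n. P $$ (i,j) * Q $$ (j,i))
      - (\<Sum>i<n. \<Sum>j<n. Q $$ (i,j) * P $$ (j,i)) + (\<Sum>i<n. \<Sum>j<n. Q $$ (i,j) * Q $$ (j,i))"
  proof -
    have e: "\<And>a b c d::complex. (a - b) * (c - d) = ((a * c - a * d) - b * c) + b * d"
      by (simp add: algebra_simps)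
    show ?thesis by (simp only: e sum.distrib sum_subtractf)
  qed
  also have "\<dots> = mtrace (P * P) - mtrace (P * Q) - mtrace (Q * P) + mtrace (Q * Q)"
    using Pc Qc by (simp add: mtrace_mult)
  also have "mtrace (Q * P) = mtrace (P * Q)" using Pc Qc by (intro mtrace_comm) auto
  finally have "of_real (\<Sum>i<n. \<Sum>j<n. (cmod ((P - Q) $$ (i,j)))^2) = mtrace P - mtrace (P * Q) - mtrace (P * Q) + mtrace Q"
    unfolding PP QQ .
  then show ?thesis by (simp add: algebra_simps)
qed

lemma frob_self:
  assumes Q: "orth_proj n Q"
  shows "of_real (\<Sum>i<n. \<Sum>j<n. (cmod (Q $$ (i,j)))^2) = mtrace Q"
proof -
  have Qc: "Q \<in> carrier_mat n n" using Q orth_carrier by auto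
  have "mat_adjoint Q = Q" "Q * Q = Q" using Q unfolding orth_proj_def by auto
  then show ?thesis using frob[OF Qc] by simp
qed

lemma entry_bound_proj:
  assumes Q: "orth_proj n Q" and tr: "mtrace Q = of_nat k" and ij: "i < n" "j < n"
  shows "cmod (Q $$ (i,j)) \<le> sqrt k"
proof -
  have "(\<Sum>i<n. \<Sum>j<n. (cmod (Q $$ (i,j)))^2) = real k"
  proof -
    have "complex_of_real (\<Sum>i<n. \<Sum>j<n. (cmod (Q $$ (i,j)))^2) = complex_of_real (real k)"
      using frob_self[OF Q] tr by simp
    then show ?thesis by (simp only: of_real_eq_iff)
  qed
  then show ?thesis using entry_le_frob[OF ij, of Q] by (intro real_le_rsqrt) simp
qed

lemma WS_bound:
  assumes X: "X \<in> carrier_mat n n" and Q: "orth_proj n Q" and tr: "mtrace Q = of_nat k"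
  shows "cmod (mtrace (X * Q)) \<le> (\<Sum>i<n. \<Sum>j<n. cmod (X $$ (i,j))) * sqrt k"
  unfolding mtrace_mult[OF X orth_carrier[OF Q]]
  by (rule trace_bound) (use entry_bound_proj[OF Q tr] in auto)

definition WS :: "nat \<Rightarrow> nat \<Rightarrow> complex mat \<Rightarrow> real set" where
  "WS n k X = {cmod (mtrace (X * P)) | P. orth_proj n P \<and> mtrace P = of_nat k}"

lemma wk_WS: "wk n k X = Sup (WS n k X)"
  unfolding wk_def WS_def ..

lemma WS_bdd: assumes X: "X \<in> carrier_mat n n" shows "bdd_above (WS n k X)"
proof (rule bdd_aboveI)
  fix x assume "x \<in> WS n k X"
  then obtain P where P: "orth_proj n P" "mtrace P = of_nat k" and x: "x = cmod (mtrace (X * P))"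
    unfolding WS_def by blast
  show "x \<le> (\<Sum>i<n. \<Sum>j<n. cmod (X $$ (i,j))) * sqrt k" unfolding x by (rule WS_bound[OF X P])
qed

lemma wk_upper:
  assumes "X \<in> carrier_mat n n" "orth_proj n Q" "mtrace Q = of_nat k"
  shows "cmod (mtrace (X * Q)) \<le> wk n k X"
proof -
  have "cmod (mtrace (X * Q)) \<in> WS n k X" unfolding WS_def using assms(2,3) by blast
  then show ?thesis unfolding wk_WS by (rule cSup_upper[OF _ WS_bdd[OF assms(1)]])
qed

lemma wk_least:
  assumes "orth_proj n Q0" "mtrace Q0 = of_nat k"
    and "\<And>Q. orth_proj n Q \<Longrightarrow> mtrace Q = of_nat k \<Longrightarrow> cmod (mtrace (X * Q)) \<le> b"
  shows "wk n k X \<le> b"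
  unfolding wk_WS
proof (rule cSup_least)
  show "WS n k X \<noteq> {}" unfolding WS_def using assms(1,2) by blast
  fix x assume "x \<in> WS n k X"
  then obtain P where P: "orth_proj n P" "mtrace P = of_nat k" and x: "x = cmod (mtrace (X * P))"
    unfolding WS_def by blast
  show "x \<le> b" unfolding x by (rule assms(3)[OF P])
qed

lemma mtrace_lin:
  assumes "A \<in> carrier_mat n n" "P \<in> carrier_mat n n" "Q \<in> carrier_mat n n"
  shows "mtrace ((A + \<mu> \<cdot>\<^sub>m P) * Q) = mtrace (A * Q) + \<mu> * mtrace (P * Q)"
proof -
  have c: "A + \<mu> \<cdot>\<^sub>m P \<in> carrier_mat n n" using assms by auto
  have "mtrace ((A + \<mu> \<cdot>\<^sub>m P) * Q) = (\<Sum>i<n. \<Sum>j<n. (A + \<mu> \<cdot>\<^sub>m P) $$ (i,j) * Q $$ (j,i))"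
    by (rule mtrace_mult[OF c assms(3)])
  also have "\<dots> = (\<Sum>i<n. \<Sum>j<n. A $$ (i,j) * Q $$ (j,i) + \<mu> * (P $$ (i,j) * Q $$ (j,i)))"
    using assms by (intro sum.cong refl) (simp add: distrib_right)
  also have "\<dots> = mtrace (A * Q) + \<mu> * mtrace (P * Q)"
    unfolding mtrace_mult[OF assms(1,3)] mtrace_mult[OF assms(2,3)]
    by (simp only: sum.distrib sum_distrib_left)
  finally show ?thesis .
qed

lemma mtrace_diff:
  assumes "A \<in> carrier_mat n n" "P \<in> carrier_mat n n" "Q \<in> carrier_mat n n"
  shows "mtrace (A * Q) - mtrace (A * P) = (\<Sum>i<n. \<Sum>j<n. A $$ (i,j) * (Q - P) $$ (j,i))"
proof -
  have "mtrace (A * Q) - mtrace (A * P) = (\<Sum>i<n. \<Sum>j<n. A $$ (i,j) * Q $$ (j,i) - A $$ (i,j) * P $$ (j,i))"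
    unfolding mtrace_mult[OF assms(1,3)] mtrace_mult[OF assms(1,2)] by (simp only: sum_subtractf)
  also have "\<dots> = (\<Sum>i<n. \<Sum>j<n. A $$ (i,j) * (Q - P) $$ (j,i))"
    using assms by (intro sum.cong refl) (simp add: right_diff_distrib)
  finally show ?thesis .
qed



lemma step1:
  assumes A: "A \<in> carrier_mat n n" and P: "orth_proj n P" and trP: "mtrace P = of_nat k"
    and par: "wk_parallel n k A P"
  shows "cmod (mtrace (A * P)) = wk n k A"
proof (rule ccontr)
  define w where "w = wk n k A"
  have Pc: "P \<in> carrier_mat n n" using P orth_carrier by auto
  have le: "cmod (mtrace (A * P)) \<le> w" unfolding w_def by (rule wk_upper[OF A P trP])
  assume "cmod (mtrace (A * P)) \<noteq> wk n k A"
  with le have lt: "cmod (mtrace (A * P)) < w" unfolding w_def by simp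
  define \<eta> where "\<eta> = w - cmod (mtrace (A * P))"
  have eta: "\<eta> > 0" using lt unfolding \<eta>_def by simp
  obtain \<mu> :: complex where mu: "cmod \<mu> = 1" and eq: "wk n k (A + \<mu> \<cdot>\<^sub>m P) = w + wk n k P"
    using par unfolding wk_parallel_def w_def by blast
  have PP: "P * P = P" using P unfolding orth_proj_def by auto
  have wP: "real k \<le> wk n k P"
    using wk_upper[OF Pc P trP] unfolding PP trP by simp
  define C where "C = (\<Sum>i<n. \<Sum>j<n. cmod (A $$ (i,j))) + 1"
  have C0: "C - 1 \<ge> 0" unfolding C_def by (auto intro!: sum_nonneg)
  then have Cpos: "C > 0" by simp
  define \<delta> where "\<delta> = min (\<eta>/2) (\<eta>^2/(8*C^2))"
  have dpos: "\<delta> > 0" unfolding \<delta>_def using eta Cpos by simp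
  have d1: "\<delta> \<le> \<eta>/2" unfolding \<delta>_def by simp
  have d2: "\<delta> * (8*C^2) \<le> \<eta>^2"
  proof -
    have "\<delta> \<le> \<eta>^2/(8*C^2)" unfolding \<delta>_def by simp
    then show ?thesis using Cpos by (simp add: pos_le_divide_eq)
  qed
  have bound: "cmod (mtrace ((A + \<mu> \<cdot>\<^sub>m P) * Q)) \<le> w + real k - \<delta>"
    if Q: "orth_proj n Q" and trQ: "mtrace Q = of_nat k" for Q
  proof -
    have Qc: "Q \<in> carrier_mat n n" using Q orth_carrier by auto
    define r where "r = (\<Sum>i<n. \<Sum>j<n. (cmod ((Q * P) $$ (i,j)))^2)"
    have r0: "r \<ge> 0" unfolding r_def by (auto intro!: sum_nonneg)
    have tr: "mtrace (P * Q) = of_real r" unfolding r_def by (rule trPQ_real[OF P Q])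
    define F where "F = (\<Sum>i<n. \<Sum>j<n. (cmod ((P - Q) $$ (i,j)))^2)"
    have "complex_of_real F = complex_of_real (2 * real k - 2 * r)"
      using frob_diff[OF P Q] unfolding F_def[symmetric] trP trQ tr by simp
    then have F: "F = 2 * real k - 2 * r" by (simp only: of_real_eq_iff)
    have F0: "F \<ge> 0" unfolding F_def by (auto intro!: sum_nonneg)
    have v1: "cmod (mtrace ((A + \<mu> \<cdot>\<^sub>m P) * Q)) \<le> cmod (mtrace (A * Q)) + r"
    proof -
      have "cmod (mtrace ((A + \<mu> \<cdot>\<^sub>m P) * Q)) = cmod (mtrace (A * Q) + \<mu> * of_real r)"
        using mtrace_lin[OF A Pc Qc] tr by simp
      also have "\<dots> \<le> cmod (mtrace (A * Q)) + cmod (\<mu> * of_real r)" by (rule norm_triangle_ineq)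
      also have "cmod (\<mu> * of_real r) = r" using mu r0 by (simp add: norm_mult)
      finally show ?thesis .
    qed
    have v2: "cmod (mtrace (A * Q)) \<le> w" unfolding w_def by (rule wk_upper[OF A Q trQ])
    have v3: "cmod (mtrace (A * Q)) \<le> cmod (mtrace (A * P)) + (C - 1) * sqrt F"
    proof -
      have "cmod (mtrace (A * Q) - mtrace (A * P)) \<le> (C - 1) * sqrt F"
        unfolding mtrace_diff[OF A Pc Qc] C_def
      proof (simp only: add_diff_cancel_right', rule trace_bound)
        fix i j assume ij: "i < n" "j < n"
        have "(Q - P) $$ (j,i) = - ((P - Q) $$ (j,i))" using ij Pc Qc by simp
        then have "cmod ((Q - P) $$ (j,i)) = cmod ((P - Q) $$ (j,i))" by simp
        moreover have "(cmod ((P - Q) $$ (j,i)))^2 \<le> F" unfolding F_def by (rule entry_le_frob[OF ij(2,1)])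
        ultimately show "cmod ((Q - P) $$ (j,i)) \<le> sqrt F" by (simp add: real_le_rsqrt)
      qed
      moreover have "cmod (mtrace (A * Q)) \<le> cmod (mtrace (A * P)) + cmod (mtrace (A * Q) - mtrace (A * P))"
        using norm_triangle_ineq2[of "mtrace (A * Q)" "mtrace (A * P)"] by linarith
      ultimately show ?thesis by linarith
    qed
    show ?thesis
    proof (cases "F / 2 \<ge> \<delta>")
      case True
      then show ?thesis using v1 v2 F by linarith
    next
      case False
      then have "F \<le> 2 * \<delta>" by linarith
      then have "F * (4 * C^2) \<le> (2 * \<delta>) * (4 * C^2)" by (rule mult_right_mono) simp
      also have "(2 * \<delta>) * (4 * C^2) = \<delta> * (8 * C^2)" by simp
      finally have Fb: "F * (4 * C^2) \<le> \<eta>^2" using d2 by linarith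
      have e1: "(C * sqrt F)^2 = C^2 * F" using F0 by (simp add: power_mult_distrib)
      have e2: "(\<eta>/2)^2 = \<eta>^2 / 4" by (simp add: power_divide)
      have e3: "C^2 * F = (F * (4 * C^2)) / 4" by simp
      have "(C * sqrt F)^2 \<le> (\<eta>/2)^2" unfolding e1 e2 e3 using Fb by (rule divide_right_mono) simp
      then have "C * sqrt F \<le> \<eta>/2" by (rule power2_le_imp_le) (use eta in auto)
      moreover have "(C - 1) * sqrt F \<le> C * sqrt F" by (rule mult_right_mono) (use F0 in auto)
      ultimately show ?thesis using v1 v3 F F0 d1 \<eta>_def by linarith
    qed
  qed
  have "wk n k (A + \<mu> \<cdot>\<^sub>m P) \<le> w + real k - \<delta>"
    by (rule wk_least[OF P trP bound])
  then show False using eq wP dpos by linarith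
qed



definition xv :: "nat \<Rightarrow> nat \<Rightarrow> complex \<Rightarrow> complex \<Rightarrow> nat \<Rightarrow> complex" where
  "xv p q a b i = (if i = p then a else if i = q then b else 0)"

definition dg :: "nat \<Rightarrow> nat set \<Rightarrow> complex mat" where
  "dg n S = Matrix.mat n n (\<lambda>(i,j). if i = j \<and> i \<in> S then 1 else 0)"

definition xx :: "nat \<Rightarrow> (nat \<Rightarrow> complex) \<Rightarrow> complex mat" where
  "xx n x = Matrix.mat n n (\<lambda>(i,j). x i * cnj (x j))"

definition prj :: "nat \<Rightarrow> nat set \<Rightarrow> nat \<Rightarrow> nat \<Rightarrow> complex \<Rightarrow> complex \<Rightarrow> complex mat" where
  "prj n S p q a b = dg n S + xx n (xv p q a b)"

lemma dg_carrier[simp]: "dg n S \<in> carrier_mat n n" unfolding dg_def by auto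
lemma xx_carrier[simp]: "xx n x \<in> carrier_mat n n" unfolding xx_def by auto
lemma prj_carrier[simp]: "prj n S p q a b \<in> carrier_mat n n" unfolding prj_def by auto

lemma prj_dims[simp]: "dim_row (prj n S p q a b) = n" "dim_col (prj n S p q a b) = n"
  unfolding prj_def dg_def xx_def by auto

lemma prj_index: "i < n \<Longrightarrow> j < n \<Longrightarrow>
  prj n S p q a b $$ (i,j) = (if i = j \<and> i \<in> S then 1 else 0) + xv p q a b i * cnj (xv p q a b j)"
  unfolding prj_def dg_def xx_def by simp

lemma cnj_xv: "cnj (xv p q a b j) = xv p q (cnj a) (cnj b) j"
  unfolding xv_def by auto

lemma sum_xv:
  assumes "p < n" "q < n" "p \<noteq> q"
  shows "(\<Sum>j<n. f j * xv p q a b j) = f p * a + f q * b"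
proof -
  have "(\<Sum>j<n. f j * xv p q a b j) = (\<Sum>j<n. (if j = p then f j * a else 0) + (if j = q then f j * b else 0))"
    using assms by (intro sum.cong refl) (auto simp: xv_def)
  also have "\<dots> = f p * a + f q * b" using assms by (simp add: sum.distrib)
  finally show ?thesis .
qed

lemma sum_dg_left:
  fixes i n :: nat
  assumes "i < n"
  shows "(\<Sum>j<n. (if i = j \<and> i \<in> S then 1 else 0) * f j) = (if i \<in> S then f i else (0::complex))"
proof (cases "i \<in> S")
  case True
  have "(\<Sum>j<n. (if i = j \<and> i \<in> S then 1 else 0) * f j) = (\<Sum>j<n. if i = j then f j else 0)"
    using True by (intro sum.cong refl) auto
  also have "\<dots> = f i" using assms by simp
  finally show ?thesis using True by simp
next
  case False
  then show ?thesis by simp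
qed

lemma sum_dg_right:
  fixes l n :: nat
  assumes "l < n"
  shows "(\<Sum>j<n. f j * (if j = l \<and> j \<in> S then 1 else 0)) = (if l \<in> S then f l else (0::complex))"
proof (cases "l \<in> S")
  case True
  have "(\<Sum>j<n. f j * (if j = l \<and> j \<in> S then 1 else 0)) = (\<Sum>j<n. if j = l then f j else 0)"
    using True by (intro sum.cong refl) auto
  also have "\<dots> = f l" using assms by simp
  finally show ?thesis using True by simp
next
  case False
  have "(\<Sum>j<n. f j * (if j = l \<and> j \<in> S then 1 else 0)) = (\<Sum>j<n. 0)"
    using False by (intro sum.cong refl) auto
  then show ?thesis using False by simp
qed

lemma rank_dg: "finite S \<Longrightarrow> vec_space.rank n (dg n S) \<le> card S"
proof (induction S rule: finite_induct)
  case empty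
  have "dg n {} = 0\<^sub>m n n" unfolding dg_def by (rule eq_matI) auto
  then show ?case using vec_space.rank_0I[of n n] by simp
next
  case (insert s S)
  have e: "dg n (insert s S) = dg n S + dg n {s}"
    unfolding dg_def by (rule eq_matI) (use insert in auto)
  have "vec_space.rank n (dg n {s}) \<le> 1"
    by (rule vec_space.rank_le_1_product_entries[of _ n n "\<lambda>r. if r = s then 1 else 0" "\<lambda>c. if c = s then 1 else 0"])
      (auto simp: dg_def)
  moreover have "vec_space.rank n (dg n (insert s S)) \<le> vec_space.rank n (dg n S) + vec_space.rank n (dg n {s})"
    unfolding e by (rule vec_space.rank_subadditive[of _ n n]) auto
  ultimately show ?case using insert by simp
qed

lemma rank_xx: "vec_space.rank n (xx n x) \<le> 1"
  by (rule vec_space.rank_le_1_product_entries[of _ n n x "\<lambda>c. cnj (x c)"]) (auto simp: xx_def)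

lemma prj_rank_le: "finite S \<Longrightarrow> vec_space.rank n (prj n S p q a b) \<le> card S + 1"
proof -
  assume "finite S"
  have "vec_space.rank n (prj n S p q a b) \<le> vec_space.rank n (dg n S) + vec_space.rank n (xx n (xv p q a b))"
    unfolding prj_def by (rule vec_space.rank_subadditive[of _ n n]) auto
  then show ?thesis using rank_dg[OF \<open>finite S\<close>, of n] rank_xx[of n "xv p q a b"] by simp
qed

lemma rank_id: "vec_space.rank n (1\<^sub>m n :: complex mat) = n"
  using vec_space.det_rank_iff[of "1\<^sub>m n :: complex mat" n] by simp

locale pdata =
  fixes n :: nat and S :: "nat set" and p q :: nat and a b :: complex
  assumes S: "S \<subseteq> {..<n}" and p: "p < n" and q: "q < n" and pq: "p \<noteq> q"
    and pS: "p \<notin> S" and qS: "q \<notin> S" and ab: "a * cnj a + b * cnj b = 1"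
begin

abbreviation "x \<equiv> xv p q a b"
abbreviation "P \<equiv> prj n S p q a b"

lemma x_S: "i \<in> S \<Longrightarrow> x i = 0"
  using pS qS unfolding xv_def by auto

lemma xnorm: "(\<Sum>j<n. cnj (x j) * x j) = 1"
proof -
  have "(\<Sum>j<n. cnj (x j) * x j) = cnj a * a + cnj b * b"
    using sum_xv[OF p q pq, of "\<lambda>j. cnj (x j)" a b] p q pq by (simp add: xv_def)
  also have "\<dots> = 1" using ab by (simp add: mult.commute)
  finally show ?thesis .
qed

lemma P_herm: "mat_adjoint P = P"
proof (rule eq_matI)
  fix i j assume "i < dim_row P" "j < dim_col P"
  then have ij: "i < n" "j < n" by auto
  show "mat_adjoint P $$ (i, j) = P $$ (i, j)"
    using ij by (auto simp: adj_index[OF prj_carrier] prj_index mult.commute)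
qed (auto simp: adj_carrier)

lemma P_idem: "P * P = P"
proof (rule eq_matI)
  fix i l assume "i < dim_row P" "l < dim_col P"
  then have il: "i < n" "l < n" by auto
  let ?d = "\<lambda>i j. (if i = j \<and> i \<in> S then 1 else 0 :: complex)"
  have "(P * P) $$ (i,l) = (\<Sum>j<n. P $$ (i,j) * P $$ (j,l))"
    by (rule mult_index[OF prj_carrier prj_carrier il])
  also have "\<dots> = (\<Sum>j<n. ?d i j * ?d j l) + (\<Sum>j<n. ?d i j * (x j * cnj (x l)))
      + (\<Sum>j<n. (x i * cnj (x j)) * ?d j l) + x i * cnj (x l) * (\<Sum>j<n. cnj (x j) * x j)"
  proof -
    have "(\<Sum>j<n. P $$ (i,j) * P $$ (j,l)) = (\<Sum>j<n. ?d i j * ?d j l + ?d i j * (x j * cnj (x l))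
      + (x i * cnj (x j)) * ?d j l + x i * cnj (x l) * (cnj (x j) * x j))"
      using il by (intro sum.cong refl) (simp add: prj_index algebra_simps)
    then show ?thesis by (simp add: sum.distrib sum_distrib_left)
  qed
  also have "(\<Sum>j<n. ?d i j * ?d j l) = ?d i l" using sum_dg_left[OF il(1), of S "\<lambda>j. ?d j l"] by auto
  also have "(\<Sum>j<n. ?d i j * (x j * cnj (x l))) = 0"
    using sum_dg_left[OF il(1), of S "\<lambda>j. x j * cnj (x l)"] x_S by auto
  also have "(\<Sum>j<n. (x i * cnj (x j)) * ?d j l) = 0"
    using sum_dg_right[OF il(2), of "\<lambda>j. x i * cnj (x j)" S] x_S by auto
  also note xnorm
  finally show "(P * P) $$ (i,l) = P $$ (i,l)" using il by (simp add: prj_index)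
qed auto

lemma P_orth: "orth_proj n P"
  unfolding orth_proj_def using P_herm P_idem by auto

lemma P_trace: "mtrace P = of_nat (card S + 1)"
proof -
  have "mtrace P = (\<Sum>i<n. (if i \<in> S then 1 else 0) + cnj (x i) * x i)"
    by (simp add: mtrace_entries[OF prj_carrier] prj_index mult.commute)
  also have "\<dots> = (\<Sum>i<n. (if i \<in> S then 1 else 0)) + 1" by (simp add: sum.distrib xnorm)
  also have "(\<Sum>i<n. (if i \<in> S then 1 else 0 :: complex)) = of_nat (card S)"
  proof -
    have "(\<Sum>i<n. (if i \<in> S then 1 else 0 :: complex)) = (\<Sum>i\<in>{i\<in>{..<n}. i \<in> S}. 1)"
      by (rule sym, rule sum.inter_filter) simp
    also have "{i\<in>{..<n}. i \<in> S} = S" using S by auto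
    finally show ?thesis by (simp only: sum_constant mult_1_right)
  qed
  finally show ?thesis by simp
qed

lemma AP_trace:
  assumes A: "A \<in> carrier_mat n n"
  shows "mtrace (A * P) = (\<Sum>s\<in>S. A $$ (s,s)) +
     (cnj a * (A $$ (p,p) * a + A $$ (p,q) * b) + cnj b * (A $$ (q,p) * a + A $$ (q,q) * b))"
proof -
  let ?d = "\<lambda>i j. (if i = j \<and> i \<in> S then 1 else 0 :: complex)"
  have "mtrace (A * P) = (\<Sum>i<n. \<Sum>j<n. A $$ (i,j) * ?d j i + cnj (x i) * (A $$ (i,j) * x j))"
    unfolding mtrace_mult[OF A prj_carrier] by (intro sum.cong refl) (simp add: prj_index algebra_simps)
  also have "\<dots> = (\<Sum>i<n. \<Sum>j<n. A $$ (i,j) * ?d j i) + (\<Sum>i<n. cnj (x i) * (\<Sum>j<n. A $$ (i,j) * x j))"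
    by (simp add: sum.distrib sum_distrib_left)
  also have "(\<Sum>i<n. \<Sum>j<n. A $$ (i,j) * ?d j i) = (\<Sum>i<n. if i \<in> S then A $$ (i,i) else 0)"
    by (intro sum.cong refl) (simp add: sum_dg_right)
  also have "\<dots> = (\<Sum>s\<in>S. A $$ (s,s))"
  proof -
    have "(\<Sum>i<n. if i \<in> S then A $$ (i,i) else 0) = (\<Sum>i\<in>{i\<in>{..<n}. i \<in> S}. A $$ (i,i))"
      by (rule sym, rule sum.inter_filter) simp
    also have "{i\<in>{..<n}. i \<in> S} = S" using S by auto
    finally show ?thesis .
  qed
  also have "(\<Sum>i<n. cnj (x i) * (\<Sum>j<n. A $$ (i,j) * x j))
      = (\<Sum>i<n. (A $$ (i,p) * a + A $$ (i,q) * b) * cnj (x i))"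
    by (intro sum.cong refl) (simp add: sum_xv[OF p q pq] mult.commute)
  also have "\<dots> = (\<Sum>i<n. (A $$ (i,p) * a + A $$ (i,q) * b) * xv p q (cnj a) (cnj b) i)"
    by (simp add: cnj_xv)
  also have "\<dots> = cnj a * (A $$ (p,p) * a + A $$ (p,q) * b) + cnj b * (A $$ (q,p) * a + A $$ (q,q) * b)"
    by (subst sum_xv[OF p q pq]) (simp add: algebra_simps)
  finally show ?thesis .
qed

lemma P_rank: "vec_space.rank n P = card S + 1"
proof -
  define T where "T = {..<n} - (S \<union> {p,q})"
  have finS: "finite S" using S finite_subset by blast
  have cS: "card (S \<union> {p,q}) = card S + 2" using finS pS qS pq by simp
  have sub: "S \<union> {p,q} \<subseteq> {..<n}" using S p q by auto
  have cT: "card T = n - (card S + 2)" unfolding T_def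
    using card_Diff_subset[OF finite_subset[OF sub] sub] cS by simp
  have le2: "card S + 2 \<le> n" using card_mono[OF _ sub] cS by simp
  have finT: "finite T" unfolding T_def by simp
  have id: "1\<^sub>m n = P + prj n T p q (- cnj b) (cnj a)"
  proof (rule eq_matI)
    fix i j assume "i < dim_row (P + prj n T p q (- cnj b) (cnj a))" "j < dim_col (P + prj n T p q (- cnj b) (cnj a))"
    then have ij: "i < n" "j < n" by auto
    have ab': "cnj a * a = 1 - cnj b * b" "a * cnj a = 1 - b * cnj b" using ab by (simp_all add: algebra_simps)
    show "1\<^sub>m n $$ (i, j) = (P + prj n T p q (- cnj b) (cnj a)) $$ (i, j)"
      using ij pS qS pq ab ab' by (auto simp: prj_index xv_def T_def algebra_simps)
  qed auto
  have "n \<le> vec_space.rank n P + vec_space.rank n (prj n T p q (- cnj b) (cnj a))"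
    using vec_space.rank_subadditive[OF prj_carrier prj_carrier, of n S p q a b T p q "- cnj b" "cnj a"]
    unfolding id[symmetric] rank_id .
  moreover have "vec_space.rank n (prj n T p q (- cnj b) (cnj a)) \<le> card T + 1" by (rule prj_rank_le[OF finT])
  moreover have "vec_space.rank n P \<le> card S + 1" by (rule prj_rank_le[OF finS])
  ultimately show ?thesis using cT le2 by linarith
qed

end



lemma norm_exp4:
  fixes m u s t :: complex and x y z :: real
  shows "(cmod (m + of_real x * u + of_real y * s + of_real z * t))^2 =
    (cmod m)^2 + x^2 * (cmod u)^2 + y^2 * (cmod s)^2 + z^2 * (cmod t)^2
    + 2 * x * Re (cnj m * u) + 2 * y * Re (cnj m * s) + 2 * z * Re (cnj m * t)
    + 2 * x * y * Re (cnj u * s) + 2 * x * z * Re (cnj u * t) + 2 * y * z * Re (cnj s * t)"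
  unfolding cmod_power2 by (simp add: power2_eq_square algebra_simps)

lemma Re_cnj_mult: "Re (cnj u * s) = Re u * Re s + Im u * Im s"
  by simp

lemma orth3_zero:
  fixes x y p1 q1 p2 q2 R :: real
  assumes "x * p1 + y * q1 = 0" "x * p2 + y * q2 = 0" "p1 * p2 + q1 * q2 = 0"
    "p1^2 + q1^2 = R" "p2^2 + q2^2 = R" "x^2 + y^2 = R"
  shows "R = 0"
proof -
  define D where "D = p1 * q2 - q1 * p2"
  have xD: "x * D = q2 * (x * p1 + y * q1) - q1 * (x * p2 + y * q2)" unfolding D_def by (simp add: power2_eq_square algebra_simps)
  have yD: "y * D = p1 * (x * p2 + y * q2) - p2 * (x * p1 + y * q1)" unfolding D_def by (simp add: power2_eq_square algebra_simps)
  have "x * D = 0" "y * D = 0" using xD yD assms by auto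
  have id1: "(p1^2 + q1^2) * (p2^2 + q2^2) = D^2 + (p1 * p2 + q1 * q2)^2" unfolding D_def by (simp add: power2_eq_square algebra_simps)
  have RR: "R * R = D^2" using id1 assms(3,4,5) by simp
  have id2: "(x^2 + y^2) * D^2 = (x * D)^2 + (y * D)^2" by (simp add: power2_eq_square algebra_simps)
  have RD: "R * D^2 = 0" using id2 assms(6) \<open>x * D = 0\<close> \<open>y * D = 0\<close> by simp
  have "R * (R * R) = 0" using RR RD by simp
  then show ?thesis by simp
qed

lemma circle2:
  fixes c \<alpha> \<beta> \<beta>' \<delta> :: complex and w :: real
  assumes H: "\<And>a b. a * cnj a + b * cnj b = 1 \<Longrightarrow>
      cmod (c + (cnj a * (\<alpha> * a + \<beta> * b) + cnj b * (\<beta>' * a + \<delta> * b))) = w"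
  shows "\<alpha> = \<delta> \<and> \<beta> = 0 \<and> \<beta>' = 0"
proof -
  define m where "m = c + (\<alpha> + \<delta>) / 2"
  define u where "u = (\<alpha> - \<delta>) / 2"
  define s1 where "s1 = (\<beta> + \<beta>') / 2"
  define s2 where "s2 = \<i> * (\<beta> - \<beta>') / 2"
  define Nm where "Nm = (cmod m)^2"
  define Nu where "Nu = (cmod u)^2"
  define N1 where "N1 = (cmod s1)^2"
  define N2 where "N2 = (cmod s2)^2"
  define Imu where "Imu = Re (cnj m * u)"
  define Im1 where "Im1 = Re (cnj m * s1)"
  define Im2 where "Im2 = Re (cnj m * s2)"
  define Iu1 where "Iu1 = Re (cnj u * s1)"
  define Iu2 where "Iu2 = Re (cnj u * s2)"
  define I12 where "I12 = Re (cnj s1 * s2)"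
  have pt: "Nm + x^2 * Nu + y^2 * N1 + z^2 * N2 + 2 * x * Imu + 2 * y * Im1 + 2 * z * Im2
      + 2 * x * y * Iu1 + 2 * x * z * Iu2 + 2 * y * z * I12 = w^2"
    if ab: "a * cnj a + b * cnj b = 1"
      and eq: "c + (cnj a * (\<alpha> * a + \<beta> * b) + cnj b * (\<beta>' * a + \<delta> * b))
               = m + of_real x * u + of_real y * s1 + of_real z * s2" for a b x y z
  proof -
    have "w^2 = (cmod (m + of_real x * u + of_real y * s1 + of_real z * s2))^2"
      using H[OF ab] eq by simp
    then show ?thesis unfolding norm_exp4 Nm_def Nu_def N1_def N2_def Imu_def Im1_def Im2_def
      Iu1_def Iu2_def I12_def by simp
  qed
  have e1: "Nm + Nu + 2 * Imu = w^2"
    using pt[of 1 0 1 0 0] by (simp add: m_def u_def s1_def s2_def field_simps)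
  have e2: "Nm + (-1)^2 * Nu + (0)^2 * N1 + (0)^2 * N2 + 2 * (-1) * Imu + 2 * (0) * Im1 + 2 * (0) * Im2
      + 2 * (-1) * (0) * Iu1 + 2 * (-1) * (0) * Iu2 + 2 * (0) * (0) * I12 = w^2"
    by (rule pt[of "0" "1"]) (simp_all add: m_def u_def s1_def s2_def field_simps)
  have e3: "Nm + (-7/25)^2 * Nu + (24/25)^2 * N1 + (0)^2 * N2 + 2 * (-7/25) * Imu + 2 * (24/25) * Im1 + 2 * (0) * Im2
      + 2 * (-7/25) * (24/25) * Iu1 + 2 * (-7/25) * (0) * Iu2 + 2 * (24/25) * (0) * I12 = w^2"
    by (rule pt[of "3/5" "4/5"]) (simp_all add: m_def u_def s1_def s2_def field_simps)
  have e4: "Nm + (7/25)^2 * Nu + (24/25)^2 * N1 + (0)^2 * N2 + 2 * (7/25) * Imu + 2 * (24/25) * Im1 + 2 * (0) * Im2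
      + 2 * (7/25) * (24/25) * Iu1 + 2 * (7/25) * (0) * Iu2 + 2 * (24/25) * (0) * I12 = w^2"
    by (rule pt[of "4/5" "3/5"]) (simp_all add: m_def u_def s1_def s2_def field_simps)
  have e5: "Nm + (-7/25)^2 * Nu + (-24/25)^2 * N1 + (0)^2 * N2 + 2 * (-7/25) * Imu + 2 * (-24/25) * Im1 + 2 * (0) * Im2
      + 2 * (-7/25) * (-24/25) * Iu1 + 2 * (-7/25) * (0) * Iu2 + 2 * (-24/25) * (0) * I12 = w^2"
    by (rule pt[of "3/5" "-4/5"]) (simp_all add: m_def u_def s1_def s2_def field_simps)
  have e6: "Nm + (-7/25)^2 * Nu + (0)^2 * N1 + (24/25)^2 * N2 + 2 * (-7/25) * Imu + 2 * (0) * Im1 + 2 * (24/25) * Im2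
      + 2 * (-7/25) * (0) * Iu1 + 2 * (-7/25) * (24/25) * Iu2 + 2 * (0) * (24/25) * I12 = w^2"
    by (rule pt[of "3/5" "4/5*\<i>"]) (simp_all add: m_def u_def s1_def s2_def field_simps)
  have e7: "Nm + (7/25)^2 * Nu + (0)^2 * N1 + (24/25)^2 * N2 + 2 * (7/25) * Imu + 2 * (0) * Im1 + 2 * (24/25) * Im2
      + 2 * (7/25) * (0) * Iu1 + 2 * (7/25) * (24/25) * Iu2 + 2 * (0) * (24/25) * I12 = w^2"
    by (rule pt[of "4/5" "3/5*\<i>"]) (simp_all add: m_def u_def s1_def s2_def field_simps)
  have e8: "Nm + (-7/25)^2 * Nu + (0)^2 * N1 + (-24/25)^2 * N2 + 2 * (-7/25) * Imu + 2 * (0) * Im1 + 2 * (-24/25) * Im2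
      + 2 * (-7/25) * (0) * Iu1 + 2 * (-7/25) * (-24/25) * Iu2 + 2 * (0) * (-24/25) * I12 = w^2"
    by (rule pt[of "3/5" "-4/5*\<i>"]) (simp_all add: m_def u_def s1_def s2_def field_simps)
  have e9: "Nm + (-7/25)^2 * Nu + (72/125)^2 * N1 + (96/125)^2 * N2 + 2 * (-7/25) * Imu + 2 * (72/125) * Im1 + 2 * (96/125) * Im2
      + 2 * (-7/25) * (72/125) * Iu1 + 2 * (-7/25) * (96/125) * Iu2 + 2 * (72/125) * (96/125) * I12 = w^2"
    by (rule pt[of "3/5" "(12 + 16*\<i>)/25"]) (simp_all add: m_def u_def s1_def s2_def field_simps)
  note es = e1 e2 e3 e4 e5 e6 e7 e8 e9
  note es' = es[simplified power2_eq_square]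
  have r1: "Iu1 = 0" "Iu2 = 0" "I12 = 0" "N1 = Nu" "N2 = Nu" using es' by linarith+
  have h1: "Re u * Re s1 + Im u * Im s1 = 0" using r1 unfolding Iu1_def by simp
  have h2: "Re u * Re s2 + Im u * Im s2 = 0" using r1 unfolding Iu2_def by simp
  have h3: "Re s1 * Re s2 + Im s1 * Im s2 = 0" using r1 unfolding I12_def by simp
  have h4: "(Re s1)^2 + (Im s1)^2 = Nu" using r1 unfolding N1_def cmod_power2 by simp
  have h5: "(Re s2)^2 + (Im s2)^2 = Nu" using r1 unfolding N2_def cmod_power2 by simp
  have h6: "(Re u)^2 + (Im u)^2 = Nu" unfolding Nu_def cmod_power2 by simp
  have R0: "Nu = 0" by (rule orth3_zero[OF h1 h2 h3 h4 h5 h6])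
  have "u = 0" using R0 unfolding Nu_def by simp
  moreover have "s1 = 0" using R0 r1 unfolding N1_def by simp
  moreover have "s2 = 0" using R0 r1 unfolding N2_def by simp
  ultimately have "\<alpha> = \<delta>" "\<beta> + \<beta>' = 0" "\<beta> - \<beta>' = 0"
    unfolding u_def s1_def s2_def by auto
  then show ?thesis by (auto simp: algebra_simps)
qed



lemma exists_S:
  assumes "1 \<le> k" "k < n" "p < n" "q < n" "p \<noteq> q"
  obtains S where "S \<subseteq> {..<n}" "p \<notin> S" "q \<notin> S" "card S = k - 1" "finite S"
proof -
  have "card ({..<n} - {p,q}) = n - 2" using assms by (simp add: card_Diff_subset)
  then have "k - 1 \<le> card ({..<n} - {p,q})" using assms by simp
  then obtain S where "S \<subseteq> {..<n} - {p,q}" "card S = k - 1" "finite S"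
    by (rule obtain_subset_with_card_n)
  then show ?thesis using that by blast
qed

lemma exists_proj:
  assumes "1 \<le> k" "k < n"
  shows "\<exists>Q. orth_proj n Q \<and> mtrace Q = of_nat k"
proof -
  obtain S where hS: "S \<subseteq> {..<n}" "0 \<notin> S" "1 \<notin> S" "card S = k - 1" "finite S"
    using exists_S[OF assms, of 0 1] assms by auto
  interpret pdata n S 0 1 1 0 using hS assms by unfold_locales auto
  have ck: "card S + 1 = k" using hS(4) assms by simp
  show ?thesis using P_orth P_trace unfolding ck by blast
qed

lemma mtrace_scalar:
  assumes "Q \<in> carrier_mat n n"
  shows "mtrace ((\<gamma> \<cdot>\<^sub>m 1\<^sub>m n) * Q) = \<gamma> * mtrace Q"
proof -
  have e: "(\<gamma> \<cdot>\<^sub>m 1\<^sub>m n) * Q = \<gamma> \<cdot>\<^sub>m Q"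
    using mult_smult_assoc_mat[OF one_carrier_mat assms] left_mult_one_mat[OF assms] by simp
  have c: "\<gamma> \<cdot>\<^sub>m Q \<in> carrier_mat n n" using assms by simp
  have "mtrace (\<gamma> \<cdot>\<^sub>m Q) = (\<Sum>i<n. (\<gamma> \<cdot>\<^sub>m Q) $$ (i,i))" by (rule mtrace_entries[OF c])
  also have "\<dots> = (\<Sum>i<n. \<gamma> * Q $$ (i,i))" using assms by (intro sum.cong refl) simp
  also have "\<dots> = \<gamma> * mtrace Q" by (simp add: mtrace_entries[OF assms] sum_distrib_left)
  finally show ?thesis unfolding e .
qed

lemma c_to_a:
  assumes k: "1 \<le> k" "k < n" and A: "A \<in> carrier_mat n n"
    and H: "\<forall>P. orth_proj n P \<and> vec_space.rank n P = k \<longrightarrow> wk_parallel n k A P"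
  shows "\<exists>\<gamma>. A = \<gamma> \<cdot>\<^sub>m 1\<^sub>m n"
proof -
  have key: "A $$ (p,p) = A $$ (q,q) \<and> A $$ (p,q) = 0 \<and> A $$ (q,p) = 0"
    if pq: "p < n" "q < n" "p \<noteq> q" for p q
  proof -
    obtain S where hS: "S \<subseteq> {..<n}" "p \<notin> S" "q \<notin> S" "card S = k - 1" "finite S"
      using exists_S[OF k pq] by blast
    show ?thesis
    proof (rule circle2[where c = "\<Sum>s\<in>S. A $$ (s,s)" and w = "wk n k A"])
      fix a b :: complex assume ab: "a * cnj a + b * cnj b = 1"
      interpret pdata n S p q a b using hS pq ab by unfold_locales auto
      have ck: "card S + 1 = k" using hS(4) k by simp
      have "wk_parallel n k A P" using H P_orth P_rank ck by auto
      moreover have trP: "mtrace P = of_nat k" using P_trace unfolding ck .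
      ultimately have "cmod (mtrace (A * P)) = wk n k A"
        using step1[OF A P_orth trP] by simp
      then show "cmod ((\<Sum>s\<in>S. A $$ (s,s)) + (cnj a * (A $$ (p,p) * a + A $$ (p,q) * b)
          + cnj b * (A $$ (q,p) * a + A $$ (q,q) * b))) = wk n k A"
        using AP_trace[OF A] by simp
    qed
  qed
  have n0: "0 < n" using k by simp
  have "A = A $$ (0,0) \<cdot>\<^sub>m 1\<^sub>m n"
  proof (rule eq_matI)
    fix i j assume "i < dim_row (A $$ (0,0) \<cdot>\<^sub>m 1\<^sub>m n)" "j < dim_col (A $$ (0,0) \<cdot>\<^sub>m 1\<^sub>m n)"
    then have ij: "i < n" "j < n" by auto
    show "A $$ (i, j) = (A $$ (0,0) \<cdot>\<^sub>m 1\<^sub>m n) $$ (i, j)"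
    proof (cases "i = j")
      case True
      then show ?thesis using ij key[of 0 i] n0 by (cases "i = 0") auto
    next
      case False
      then show ?thesis using ij key[of i j] by auto
    qed
  qed (use A in auto)
  then show ?thesis by blast
qed

lemma wk_scalar:
  assumes k: "1 \<le> k" "k < n"
  shows "wk n k (\<gamma> \<cdot>\<^sub>m 1\<^sub>m n) = cmod \<gamma> * real k"
proof -
  obtain Q0 where Q0: "orth_proj n Q0" "mtrace Q0 = of_nat k" using exists_proj[OF k] by blast
  have val: "cmod (mtrace ((\<gamma> \<cdot>\<^sub>m 1\<^sub>m n) * Q)) = cmod \<gamma> * real k"
    if "orth_proj n Q" "mtrace Q = of_nat k" for Q
    using that mtrace_scalar[OF orth_carrier[OF that(1)], of \<gamma>] by (simp add: norm_mult)
  have "wk n k (\<gamma> \<cdot>\<^sub>m 1\<^sub>m n) \<le> cmod \<gamma> * real k"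
    by (rule wk_least[OF Q0]) (simp add: val)
  moreover have "cmod \<gamma> * real k \<le> wk n k (\<gamma> \<cdot>\<^sub>m 1\<^sub>m n)"
    using wk_upper[of "\<gamma> \<cdot>\<^sub>m 1\<^sub>m n" n Q0 k] Q0 val[OF Q0] by simp
  ultimately show ?thesis by simp
qed

lemma a_to_b:
  assumes k: "1 \<le> k" "k < n" and B: "B \<in> carrier_mat n n"
  shows "wk_parallel n k (\<gamma> \<cdot>\<^sub>m 1\<^sub>m n) B"
proof -
  define A where "A = \<gamma> \<cdot>\<^sub>m 1\<^sub>m n"
  have A: "A \<in> carrier_mat n n" unfolding A_def by simp
  obtain Q0 where Q0: "orth_proj n Q0" "mtrace Q0 = of_nat k" using exists_proj[OF k] by blast
  define wb where "wb = wk n k B"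
  have ex: "\<exists>Q. orth_proj n Q \<and> mtrace Q = of_nat k \<and> wb - inverse (real (Suc j)) < cmod (mtrace (B * Q))" for j
  proof -
    have ne: "WS n k B \<noteq> {}" unfolding WS_def using Q0 by blast
    have "wb - inverse (real (Suc j)) < Sup (WS n k B)" unfolding wb_def wk_WS by simp
    then obtain x where "x \<in> WS n k B" "wb - inverse (real (Suc j)) < x" using less_cSupD[OF ne] by blast
    then show ?thesis unfolding WS_def by blast
  qed
  have "\<forall>j. \<exists>Q. orth_proj n Q \<and> mtrace Q = of_nat k \<and> wb - inverse (real (Suc j)) < cmod (mtrace (B * Q))"
    using ex by blast
  from choice[OF this] obtain Qs where Qs0: "\<forall>j. orth_proj n (Qs j) \<and> mtrace (Qs j) = of_nat k \<and> wb - inverse (real (Suc j)) < cmod (mtrace (B * Qs j))"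
    by blast
  have Qs: "orth_proj n (Qs j) \<and> mtrace (Qs j) = of_nat k \<and> wb - inverse (real (Suc j)) < cmod (mtrace (B * Qs j))" for j
    using Qs0 by blast
  define z where "z j = mtrace (B * Qs j)" for j
  have "bounded (range z)"
    unfolding bounded_iff z_def using WS_bound[OF B] Qs by blast
  then obtain l r where r: "strict_mono r" and lim: "(z \<circ> r) \<longlonglongrightarrow> l"
    using bounded_imp_convergent_subsequence by blast
  define g where "g = (if \<gamma> = 0 then 1 else \<gamma> / of_real (cmod \<gamma>))"
  define h where "h = (if l = 0 then 1 else cnj l / of_real (cmod l))"
  define \<mu> where "\<mu> = g * h"
  have g1: "cmod g = 1" unfolding g_def by (simp add: norm_divide)
  have h1: "cmod h = 1" unfolding h_def by (simp add: norm_divide)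
  have mu1: "cmod \<mu> = 1" unfolding \<mu>_def using g1 h1 by (simp add: norm_mult)
  have gg: "\<gamma> = g * of_real (cmod \<gamma>)" unfolding g_def by auto
  have hl: "h * l = of_real (cmod l)"
  proof (cases "l = 0")
    case True then show ?thesis unfolding h_def by simp
  next
    case False
    have sq: "cnj l * l = of_real (cmod l) * of_real (cmod l)"
      using complex_norm_square[of l] by (simp add: mult.commute power2_eq_square)
    have "h * l = (cnj l * l) / of_real (cmod l)" unfolding h_def using False by simp
    also have "\<dots> = of_real (cmod l)" unfolding sq using False by simp
    finally show ?thesis .
  qed
  have wA: "wk n k A = cmod \<gamma> * real k" unfolding A_def by (rule wk_scalar[OF k])
  have trAQ: "mtrace ((A + \<mu> \<cdot>\<^sub>m B) * Q) = \<gamma> * of_nat k + \<mu> * mtrace (B * Q)"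
    if "orth_proj n Q" "mtrace Q = of_nat k" for Q
    using mtrace_lin[OF A B orth_carrier[OF that(1)]] mtrace_scalar[OF orth_carrier[OF that(1)], of \<gamma>] that(2)
    unfolding A_def by simp
  have upper: "wk n k (A + \<mu> \<cdot>\<^sub>m B) \<le> cmod \<gamma> * real k + wb"
  proof (rule wk_least[OF Q0])
    fix Q assume Q: "orth_proj n Q" "mtrace Q = of_nat k"
    have "cmod (mtrace ((A + \<mu> \<cdot>\<^sub>m B) * Q)) \<le> cmod (\<gamma> * of_nat k) + cmod (\<mu> * mtrace (B * Q))"
      unfolding trAQ[OF Q] by (rule norm_triangle_ineq)
    also have "\<dots> = cmod \<gamma> * real k + cmod (mtrace (B * Q))" using mu1 by (simp add: norm_mult)
    also have "cmod (mtrace (B * Q)) \<le> wb" unfolding wb_def by (rule wk_upper[OF B Q])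
    finally show "cmod (mtrace ((A + \<mu> \<cdot>\<^sub>m B) * Q)) \<le> cmod \<gamma> * real k + wb" by simp
  qed
  have ABc: "A + \<mu> \<cdot>\<^sub>m B \<in> carrier_mat n n" using A B by simp
  have lim2: "(\<lambda>j. cmod (\<gamma> * of_nat k + \<mu> * (z \<circ> r) j)) \<longlonglongrightarrow> cmod (\<gamma> * of_nat k + \<mu> * l)"
    by (intro tendsto_intros lim)
  have eqN: "cmod (\<gamma> * of_nat k + \<mu> * l) = cmod \<gamma> * real k + cmod l"
  proof -
    have "\<mu> * l = g * (h * l)" unfolding \<mu>_def by simp
    then have "\<gamma> * of_nat k + \<mu> * l = g * of_real (cmod \<gamma> * real k + cmod l)"
      using gg hl by (simp add: algebra_simps)
    then have "cmod (\<gamma> * of_nat k + \<mu> * l) = cmod (g * of_real (cmod \<gamma> * real k + cmod l))"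
      by (rule arg_cong)
    also have "\<dots> = cmod \<gamma> * real k + cmod l"
      unfolding norm_mult g1 norm_of_real by simp
    finally show ?thesis .
  qed
  have "cmod (\<gamma> * of_nat k + \<mu> * l) \<le> wk n k (A + \<mu> \<cdot>\<^sub>m B)"
  proof (rule LIMSEQ_le_const2[OF lim2], intro exI allI impI)
    fix j :: nat
    have "cmod (\<gamma> * of_nat k + \<mu> * (z \<circ> r) j) = cmod (mtrace ((A + \<mu> \<cdot>\<^sub>m B) * Qs (r j)))"
      using trAQ[of "Qs (r j)"] Qs[of "r j"] unfolding z_def by simp
    also have "\<dots> \<le> wk n k (A + \<mu> \<cdot>\<^sub>m B)" using wk_upper[OF ABc, of "Qs (r j)" k] Qs[of "r j"] by simp
    finally show "cmod (\<gamma> * of_nat k + \<mu> * (z \<circ> r) j) \<le> wk n k (A + \<mu> \<cdot>\<^sub>m B)" .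
  qed
  moreover note eqN
  moreover have "wb \<le> cmod l"
  proof -
    have li: "((\<lambda>j. inverse (real (Suc j))) \<circ> r) \<longlonglongrightarrow> 0"
      by (rule LIMSEQ_subseq_LIMSEQ[OF LIMSEQ_inverse_real_of_nat r])
    have "(\<lambda>j. cmod ((z \<circ> r) j) + ((\<lambda>j. inverse (real (Suc j))) \<circ> r) j) \<longlonglongrightarrow> cmod l + 0"
      by (intro tendsto_intros lim li)
    then have lim3: "(\<lambda>j. cmod ((z \<circ> r) j) + ((\<lambda>j. inverse (real (Suc j))) \<circ> r) j) \<longlonglongrightarrow> cmod l"
      by simp
    have "\<forall>j\<ge>0. wb \<le> cmod ((z \<circ> r) j) + ((\<lambda>j. inverse (real (Suc j))) \<circ> r) j"
    proof (intro allI impI)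
      fix j :: nat
      show "wb \<le> cmod ((z \<circ> r) j) + ((\<lambda>j. inverse (real (Suc j))) \<circ> r) j"
        using Qs[of "r j"] unfolding z_def by simp
    qed
    then show ?thesis by (intro LIMSEQ_le_const[OF lim3]) blast
  qed
  ultimately have lower: "cmod \<gamma> * real k + wb \<le> wk n k (A + \<mu> \<cdot>\<^sub>m B)" by linarith
  have "wk n k (A + \<mu> \<cdot>\<^sub>m B) = wk n k A + wk n k B"
    using upper lower wA unfolding wb_def by linarith
  then show ?thesis unfolding wk_parallel_def A_def using mu1 by blast
qed


theorem mainTheorem6:
  fixes n k :: nat and A :: "complex mat"
  assumes "1 \<le> k" and "k < n" and "A \<in> carrier_mat n n"
  shows "((\<exists>\<gamma>::complex. A = \<gamma> \<cdot>\<^sub>m 1\<^sub>m n) \<longleftrightarrow>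
            (\<forall>B \<in> carrier_mat n n. wk_parallel n k A B))
       \<and> ((\<forall>B \<in> carrier_mat n n. wk_parallel n k A B) \<longleftrightarrow>
            (\<forall>P. orth_proj n P \<and> vec_space.rank n P = k \<longrightarrow> wk_parallel n k A P))"
proof -
  have ab: "\<forall>B \<in> carrier_mat n n. wk_parallel n k A B" if "\<exists>\<gamma>::complex. A = \<gamma> \<cdot>\<^sub>m 1\<^sub>m n"
    using that a_to_b[OF assms(1,2)] by blast
  have bc: "\<forall>P. orth_proj n P \<and> vec_space.rank n P = k \<longrightarrow> wk_parallel n k A P"
    if "\<forall>B \<in> carrier_mat n n. wk_parallel n k A B"
    using that orth_carrier by blast
  have ca: "\<exists>\<gamma>::complex. A = \<gamma> \<cdot>\<^sub>m 1\<^sub>m n"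
    if "\<forall>P. orth_proj n P \<and> vec_space.rank n P = k \<longrightarrow> wk_parallel n k A P"
    using c_to_a[OF assms that] .
  show ?thesis using ab bc ca by blast
qed

end
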